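(* Let $0<L<\infty$, $\varphi\in(0,1)$, $\kappa_f,\kappa_s,h_v,c_{p,f},\dot m_c,A_c>0$, $T_b,q_{HG}\in\mathbb R$, and consider the boundary value problem for $(T_f,T_s)$ on $[0,L]$: $$-\varphi\kappa_fT_f''+c_{p,f}\frac{\dot m_c}{A_c}T_f'=h_v(T_s-T_f),\qquad (1-\varphi)\kappa_sT_s''=h_v(T_s-T_f)\quad\text{on }(0,L),$$ $$T_f(0)=T_s(0)=T_b,\quad (1-\varphi)\kappa_sT_s'(L)=q_{HG}-c_{p,f}\frac{\dot m_c}{A_c}(T_s(L)-T_f(L)),\quad T_f'(L)=\frac{h_vA_c}{c_{p,f}\dot m_c}(T_s(L)-T_f(L)).$$ Then: (1) this problem has a unique solution; (2) if $q_{HG}>0$, then $T_s-T_f$ is positive, $T_f$ is monotonically increasing with $T_f(y)\ge T_b$ for $y\in[0,L]$, and $T_s$ is monotonically increasing with $T_s(y)\ge T_b$ for $y\in[0,L]$; (3) if $q_{HG}=0$, then $T_f(y)=T_s(y)=T_b$ for all $y\in[0,L]$. *)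

theory Defs
  imports "HOL-Analysis.Analysis"
begin

definition bvp_solution ::
  "real \<Rightarrow> real \<Rightarrow> real \<Rightarrow> real \<Rightarrow> real \<Rightarrow> real \<Rightarrow> real \<Rightarrow> real \<Rightarrow> real \<Rightarrow> real \<Rightarrow>
   (real \<Rightarrow> real) \<Rightarrow> (real \<Rightarrow> real) \<Rightarrow> bool" where
  "bvp_solution L \<phi> \<kappa>f \<kappa>s hv cpf mc Ac Tb qHG Tf Ts \<longleftrightarrow>
     (\<exists>Tf' Ts' Tf'' Ts''.
        (\<forall>y\<in>{0..L}. (Tf has_real_derivative Tf' y) (at y within {0..L})) \<and>
        (\<forall>y\<in>{0..L}. (Ts has_real_derivative Ts' y) (at y within {0..L})) \<and>
        continuous_on {0..L} Tf' \<and> continuous_on {0..L} Ts' \<and>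
        (\<forall>y\<in>{0<..<L}. (Tf' has_real_derivative Tf'' y) (at y)) \<and>
        (\<forall>y\<in>{0<..<L}. (Ts' has_real_derivative Ts'' y) (at y)) \<and>
        (\<forall>y\<in>{0<..<L}.
           - \<phi> * \<kappa>f * Tf'' y + cpf * (mc / Ac) * Tf' y = hv * (Ts y - Tf y)) \<and>
        (\<forall>y\<in>{0<..<L}. (1 - \<phi>) * \<kappa>s * Ts'' y = hv * (Ts y - Tf y)) \<and>
        Tf 0 = Tb \<and> Ts 0 = Tb \<and>
        (1 - \<phi>) * \<kappa>s * Ts' L = qHG - cpf * (mc / Ac) * (Ts L - Tf L) \<and>
        Tf' L = (hv * Ac) / (cpf * mc) * (Ts L - Tf L))"

end

theory Submission
  imports Defs
begin


definition sys :: "real \<Rightarrow> real \<Rightarrow> real \<Rightarrow> real \<Rightarrow> real \<Rightarrow> (real\<Rightarrow>real) \<Rightarrow> (real\<Rightarrow>real) \<Rightarrow> (real\<Rightarrow>real) \<Rightarrow> bool" where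
 "sys a b c h L D u w \<longleftrightarrow> continuous_on {0..L} D \<and> continuous_on {0..L} u \<and> continuous_on {0..L} w \<and>
   (\<forall>y\<in>{0<..<L}. (D has_real_derivative (w y - u y)) (at y) \<and>
      (u has_real_derivative ((b * u y - h * D y) / a)) (at y) \<and>
      (w has_real_derivative (h * D y / c)) (at y))"

lemma incr_sub:
  assumes "continuous_on {0..L} f" "0 \<le> x" "x \<le> y" "y \<le> L"
    "\<And>t. x < t \<Longrightarrow> t < y \<Longrightarrow> (f has_real_derivative f' t) (at t) \<and> 0 \<le> f' t"
  shows "f x \<le> f y"
proof (rule DERIV_nonneg_imp_increasing_open[OF assms(3)])
  show "continuous_on {x..y} f" using assms(1) by (rule continuous_on_subset) (use assms in auto)
  fix t assume "x < t" "t < y" thus "\<exists>z. (f has_real_derivative z) (at t) \<and> 0 \<le> z" using assms(5) by blast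
qed

lemma incr_sub_strict:
  assumes "continuous_on {0..L} f" "0 \<le> x" "x < y" "y \<le> L"
    "\<And>t. x < t \<Longrightarrow> t < y \<Longrightarrow> (f has_real_derivative f' t) (at t) \<and> 0 < f' t"
  shows "f x < f y"
proof (rule DERIV_pos_imp_increasing_open[OF assms(3)])
  show "continuous_on {x..y} f" using assms(1) by (rule continuous_on_subset) (use assms in auto)
  fix t assume "x < t" "t < y" thus "\<exists>z. (f has_real_derivative z) (at t) \<and> 0 < z" using assms(5) by blast
qed

context
  fixes a b c h L :: real
  assumes a: "0 < a" and b: "0 < b" and c: "0 < c" and h: "0 < h" and L: "0 < L"
begin

lemma sys_neg: assumes "sys a b c h L D u w" shows "sys a b c h L (\<lambda>y. - D y) (\<lambda>y. - u y) (\<lambda>y. - w y)"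
  unfolding sys_def
proof (intro conjI ballI)
  show "continuous_on {0..L} (\<lambda>y. - D y)" "continuous_on {0..L} (\<lambda>y. - u y)" "continuous_on {0..L} (\<lambda>y. - w y)"
    using assms unfolding sys_def by (auto intro!: continuous_intros)
  fix y assume "y \<in> {0<..<L}"
  then have D: "(D has_real_derivative (w y - u y)) (at y)"
    and U: "(u has_real_derivative ((b * u y - h * D y) / a)) (at y)"
    and W: "(w has_real_derivative (h * D y / c)) (at y)" using assms unfolding sys_def by auto
  show "((\<lambda>y. - D y) has_real_derivative (- w y - - u y)) (at y)"
    using DERIV_minus[OF D] by simp
  show "((\<lambda>y. - u y) has_real_derivative ((b * - u y - h * - D y) / a)) (at y)"
    proof -
      have "- ((b * u y - h * D y) / a) = (b * - u y - h * - D y) / a" using a by (simp add: field_simps)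
      thus ?thesis using DERIV_minus[OF U] by simp
    qed
  show "((\<lambda>y. - w y) has_real_derivative (h * - D y / c)) (at y)"
    using DERIV_minus[OF W] by simp
qed

lemma sys_cont:
  assumes "sys a b c h L D u w"
  shows "continuous_on {0..L} D" "continuous_on {0..L} u" "continuous_on {0..L} w"
  using assms unfolding sys_def by auto

lemma sys_der:
  assumes "sys a b c h L D u w" "0 < y" "y < L"
  shows "(D has_real_derivative (w y - u y)) (at y)"
    "(u has_real_derivative ((b * u y - h * D y) / a)) (at y)"
    "(w has_real_derivative (h * D y / c)) (at y)"
  using assms unfolding sys_def by auto

lemma sys_g_der:
  assumes "sys a b c h L D u w" "0 < y" "y < L"
  shows "((\<lambda>y. exp (-(b/a)*y) * u y) has_real_derivative (- exp (-(b/a)*y) * (h * D y / a))) (at y)"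
proof -
  have "((\<lambda>y. exp (-(b/a)*y) * u y) has_real_derivative
     (exp (-(b/a)*y) * (-(b/a)) * u y + exp (-(b/a)*y) * ((b * u y - h * D y) / a))) (at y)"
    using a by (auto intro!: derivative_eq_intros sys_der[OF assms])
  moreover have "exp (-(b/a)*y) * (-(b/a)) * u y + exp (-(b/a)*y) * ((b * u y - h * D y) / a)
     = - exp (-(b/a)*y) * (h * D y / a)" using a by (simp add: field_simps)
  ultimately show ?thesis by simp
qed

lemma sys_g_cont:
  assumes "sys a b c h L D u w"
  shows "continuous_on {0..L} (\<lambda>y. exp (-(b/a)*y) * u y)"
  using sys_cont[OF assms] a by (auto intro!: continuous_intros)

lemma exp_shift:
  assumes "exp (-(b/a)*t1) * x \<le> exp (-(b/a)*t2) * y"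
  shows "x \<le> exp (-(b/a)*(t2-t1)) * y"
proof -
  have "x = exp ((b/a)*t1) * (exp (-(b/a)*t1) * x)"
    by (simp add: exp_minus)
  also have "\<dots> \<le> exp ((b/a)*t1) * (exp (-(b/a)*t2) * y)"
    by (rule mult_left_mono[OF assms]) simp
  also have "exp ((b/a)*t1) * (exp (-(b/a)*t2) * y) = (exp ((b/a)*t1) * exp (-(b/a)*t2)) * y"
    by (simp only: mult.assoc)
  also have "exp ((b/a)*t1) * exp (-(b/a)*t2) = exp (-(b/a)*(t2-t1))"
    by (simp add: exp_add[symmetric] right_diff_distrib)
  finally show ?thesis .
qed

end

context
  fixes a b c h L :: real
  assumes a: "0 < a" and b: "0 < b" and c: "0 < c" and h: "0 < h" and L: "0 < L"
begin

lemma lemB: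
  assumes S: "sys a b c h L D u w" and al: "0 \<le> \<alpha>" "\<alpha> < \<beta>" "\<beta> \<le> L"
    and Db: "D \<beta> \<le> 0" and ub: "u \<beta> \<le> 0" and wb: "w \<beta> \<ge> 0" and nz: "w \<beta> > 0 \<or> u \<beta> < 0"
  shows "D \<alpha> < 0"
proof -
  note cD = sys_cont(1)[OF a b c h L S] and cu = sys_cont(2)[OF a b c h L S] and cw = sys_cont(3)[OF a b c h L S]
  note der = sys_der[OF a b c h L S]
  define E where "E = exp (-(b/a)*(\<beta>-\<alpha>))"
  have "0 \<le> (b/a)*(\<beta>-\<alpha>)" using a b al by simp
  hence E: "0 < E" "E \<le> 1" unfolding E_def by auto
  define m where "m = w \<beta> - E * u \<beta>"
  have "E * u \<beta> \<le> 0" using E ub by (simp add: mult_nonneg_nonpos)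
  moreover have "u \<beta> < 0 \<Longrightarrow> E * u \<beta> < 0" using E by (simp add: mult_pos_neg)
  ultimately have m: "m > 0" using nz wb unfolding m_def by linarith
  define \<epsilon> where "\<epsilon> = m/2"
  have Pge: "\<forall>t\<in>{\<alpha>..\<beta>}. w t - u t > \<epsilon>"
  proof (rule ccontr)
    assume nP: "\<not> (\<forall>t\<in>{\<alpha>..\<beta>}. w t - u t > \<epsilon>)"
    define T where "T = {t \<in> {\<alpha>..\<beta>}. w t - u t \<le> \<epsilon>}"
    have ne: "T \<noteq> {}" using nP unfolding T_def by auto
    have cwu: "continuous_on {\<alpha>..\<beta>} (\<lambda>t. w t - u t)"
      using cw cu al by (auto intro!: continuous_intros elim!: continuous_on_subset)
    have cl: "closed T" unfolding T_def
      by (rule continuous_on_closed_Collect_le[OF cwu]) auto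
    have bdd: "bdd_above T" unfolding T_def by (rule bdd_aboveI[of _ \<beta>]) auto
    define t0 where "t0 = Sup T"
    have t0T: "t0 \<in> T" unfolding t0_def by (rule closed_contains_Sup[OF ne bdd cl])
    hence t0: "\<alpha> \<le> t0" "t0 \<le> \<beta>" "w t0 - u t0 \<le> \<epsilon>" unfolding T_def by auto
    have gt: "w t - u t > \<epsilon>" if "t0 < t" "t \<le> \<beta>" for t
    proof (rule ccontr)
      assume "\<not> w t - u t > \<epsilon>"
      hence "t \<in> T" using that t0 unfolding T_def by auto
      hence "t \<le> t0" unfolding t0_def by (rule cSup_upper[OF _ bdd])
      thus False using that by simp
    qed
    have "u \<beta> \<le> E * u \<beta>" using mult_nonneg_nonneg[of "1-E" "- u \<beta>"] E ub by (simp add: algebra_simps)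
    hence "w \<beta> - u \<beta> \<ge> m" unfolding m_def by simp
    hence "t0 \<noteq> \<beta>" using t0 m unfolding \<epsilon>_def by auto
    hence "t0 < \<beta>" using t0 by simp
    have Dle: "D t \<le> 0" if "t0 \<le> t" "t \<le> \<beta>" for t
    proof -
      have "D t \<le> D \<beta>"
      proof (rule incr_sub[OF cD, of t \<beta> "\<lambda>s. w s - u s"])
        fix s assume s: "t < s" "s < \<beta>"
        have "w s - u s > \<epsilon>" using gt[of s] s that by simp
        moreover have "\<epsilon> > 0" using m unfolding \<epsilon>_def by simp
        ultimately show "(D has_real_derivative w s - u s) (at s) \<and> 0 \<le> w s - u s"
          using der(1)[of s] s that t0 al by auto
      qed (use that t0 al in auto)
      thus ?thesis using Db by simp
    qed
    have wle: "w \<beta> \<le> w t0"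
    proof -
      have "(\<lambda>y. - w y) t0 \<le> (\<lambda>y. - w y) \<beta>"
      proof (rule incr_sub[of L _ t0 \<beta> "\<lambda>s. - (h * D s / c)"])
        show "continuous_on {0..L} (\<lambda>y. - w y)" using cw by (auto intro!: continuous_intros)
        fix s assume s: "t0 < s" "s < \<beta>"
        show "((\<lambda>y. - w y) has_real_derivative - (h * D s / c)) (at s) \<and> 0 \<le> - (h * D s / c)"
          using DERIV_minus[OF der(3)[of s]] s t0 al Dle[of s] h c
          by (auto simp: divide_nonpos_pos mult_nonneg_nonpos)
      qed (use t0 al in auto)
      thus ?thesis by simp
    qed
    have gle: "exp (-(b/a)*t0) * u t0 \<le> exp (-(b/a)*\<beta>) * u \<beta>"
    proof (rule incr_sub[OF sys_g_cont[OF a b c h L S], of t0 \<beta> "\<lambda>r. - exp (-(b/a)* r) * (h * D r / a)"])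
      fix r assume s: "t0 < r" "r < \<beta>"
      have "0 \<le> - exp (-(b/a)* r) * (h * D r / a)"
        using Dle[of r] s h a by (auto simp: mult_nonneg_nonpos divide_nonpos_pos)
      thus "((\<lambda>y. exp (-(b/a)*y) * u y) has_real_derivative - exp (-(b/a)* r) * (h * D r / a)) (at r) \<and> 0 \<le> - exp (-(b/a)* r) * (h * D r / a)"
        using sys_g_der[OF a b c h L S, of r] s t0 al by auto
    qed (use t0 al in auto)
    have ule: "u t0 \<le> exp (-(b/a)*(\<beta>-t0)) * u \<beta>" by (rule exp_shift[OF a b c h L gle])
    have "exp (-(b/a)*(\<beta>-\<alpha>)) \<le> exp (-(b/a)*(\<beta>-t0))"
      using t0 a b by (simp add: field_simps mult_left_mono)
    hence "exp (-(b/a)*(\<beta>-t0)) * u \<beta> \<le> E * u \<beta>" unfolding E_def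
      using ub by (simp add: mult_right_mono_neg)
    hence "w t0 - u t0 \<ge> m" using ule wle unfolding m_def by simp
    thus False using t0 m unfolding \<epsilon>_def by simp
  qed
  have "D \<alpha> < D \<beta>"
  proof (rule incr_sub_strict[OF cD, of \<alpha> \<beta> "\<lambda>r. w r - u r"])
    fix t assume t: "\<alpha> < t" "t < \<beta>"
    have "w t - u t > \<epsilon>" using Pge t by auto
    moreover have "\<epsilon> > 0" using m unfolding \<epsilon>_def by simp
    ultimately show "(D has_real_derivative w t - u t) (at t) \<and> 0 < w t - u t"
      using der(1)[of t] t al by auto
  qed (use al in auto)
  thus ?thesis using Db by simp
qed

end

context
  fixes a b c h L :: real
  assumes a: "0 < a" and b: "0 < b" and c: "0 < c" and h: "0 < h" and L: "0 < L"
begin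

lemma g_decr:
  assumes S: "sys a b c h L D u w" and "0 \<le> x" "x \<le> y" "y \<le> L" and Dn: "\<And>t. x < t \<Longrightarrow> t < y \<Longrightarrow> D t \<ge> 0"
  shows "u y \<le> exp (-(b/a)*(x-y)) * u x"
proof -
  have "(\<lambda>r. - (exp (-(b/a)* r) * u r)) x \<le> (\<lambda>r. - (exp (-(b/a)* r) * u r)) y"
  proof (rule incr_sub[of L _ x y "\<lambda>r. exp (-(b/a)* r) * (h * D r / a)"])
    show "continuous_on {0..L} (\<lambda>r. - (exp (-(b/a)* r) * u r))"
      using sys_g_cont[OF a b c h L S] by (auto intro!: continuous_intros)
    fix r assume r: "x < r" "r < y"
    have "0 \<le> exp (-(b/a)* r) * (h * D r / a)" using Dn[OF r] h a by simp
    thus "((\<lambda>r. - (exp (-(b/a)* r) * u r)) has_real_derivative exp (-(b/a)* r) * (h * D r / a)) (at r) \<and> 0 \<le> exp (-(b/a)* r) * (h * D r / a)"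
      using DERIV_minus[OF sys_g_der[OF a b c h L S, of r]] r assms by auto
  qed (use assms in auto)
  hence "exp (-(b/a)*y) * u y \<le> exp (-(b/a)*x) * u x" by simp
  thus ?thesis by (rule exp_shift[OF a b c h L])
qed

lemma lemF0:
  assumes S: "sys a b c h L D u w" and al: "0 \<le> \<alpha>" "\<alpha> < \<beta>" "\<beta> \<le> L"
    and Da: "D \<alpha> \<ge> 0" and ua: "u \<alpha> \<le> 0" and wa: "w \<alpha> \<ge> 0" and Pa: "w \<alpha> - u \<alpha> > 0"
  shows "D \<beta> > D \<alpha> \<and> u \<beta> \<le> 0"
proof -
  note cD = sys_cont(1)[OF a b c h L S] and cu = sys_cont(2)[OF a b c h L S] and cw = sys_cont(3)[OF a b c h L S]
  note der = sys_der[OF a b c h L S]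
  define \<epsilon> where "\<epsilon> = (w \<alpha> - u \<alpha>)/2"
  have eps: "\<epsilon> > 0" "w \<alpha> - u \<alpha> > \<epsilon>" using Pa unfolding \<epsilon>_def by auto
  have Pge: "\<forall>t\<in>{\<alpha>..\<beta>}. w t - u t > \<epsilon>"
  proof (rule ccontr)
    assume nP: "\<not> (\<forall>t\<in>{\<alpha>..\<beta>}. w t - u t > \<epsilon>)"
    define T where "T = {t \<in> {\<alpha>..\<beta>}. w t - u t \<le> \<epsilon>}"
    have ne: "T \<noteq> {}" using nP unfolding T_def by auto
    have cwu: "continuous_on {\<alpha>..\<beta>} (\<lambda>t. w t - u t)"
      using cw cu al by (auto intro!: continuous_intros elim!: continuous_on_subset)
    have cl: "closed T" unfolding T_def
      by (rule continuous_on_closed_Collect_le[OF cwu]) auto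
    have bdd: "bdd_below T" unfolding T_def by (rule bdd_belowI[of _ \<alpha>]) auto
    define t0 where "t0 = Inf T"
    have t0T: "t0 \<in> T" unfolding t0_def by (rule closed_contains_Inf[OF ne bdd cl])
    hence t0: "\<alpha> \<le> t0" "t0 \<le> \<beta>" "w t0 - u t0 \<le> \<epsilon>" unfolding T_def by auto
    have lt: "w t - u t > \<epsilon>" if "\<alpha> \<le> t" "t < t0" for t
    proof (rule ccontr)
      assume "\<not> w t - u t > \<epsilon>"
      hence "t \<in> T" using that t0 unfolding T_def by auto
      hence "t0 \<le> t" unfolding t0_def by (rule cInf_lower[OF _ bdd])
      thus False using that by simp
    qed
    have "t0 \<noteq> \<alpha>" using t0 eps by auto
    hence "\<alpha> < t0" using t0 by simp
    have Dge: "D t \<ge> 0" if "\<alpha> \<le> t" "t \<le> t0" for t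
    proof -
      have "D \<alpha> \<le> D t"
      proof (rule incr_sub[OF cD, of \<alpha> t "\<lambda>r. w r - u r"])
        fix r assume r: "\<alpha> < r" "r < t"
        have "w r - u r > \<epsilon>" using lt[of r] r that by simp
        thus "(D has_real_derivative w r - u r) (at r) \<and> 0 \<le> w r - u r"
          using der(1)[of r] r that t0 al eps by auto
      qed (use that t0 al in auto)
      thus ?thesis using Da by simp
    qed
    have wle: "w \<alpha> \<le> w t0"
    proof (rule incr_sub[OF cw, of \<alpha> t0 "\<lambda>r. h * D r / c"])
      fix r assume r: "\<alpha> < r" "r < t0"
      show "(w has_real_derivative h * D r / c) (at r) \<and> 0 \<le> h * D r / c"
        using der(3)[of r] r t0 al Dge[of r] h c by auto
    qed (use t0 al in auto)
    have ule: "u t0 \<le> exp (-(b/a)*(\<alpha>-t0)) * u \<alpha>"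
      by (rule g_decr[OF S]) (use t0 al Dge in auto)
    have "0 \<le> (b/a)*(t0-\<alpha>)" using t0 a b by simp
    moreover have "-(b/a)*(\<alpha>-t0) = (b/a)*(t0-\<alpha>)" by (metis minus_diff_eq mult_minus_left mult_minus_right)
    ultimately have "0 \<le> -(b/a)*(\<alpha>-t0)" by simp
    hence "1 \<le> exp (-(b/a)*(\<alpha>-t0))" by simp
    hence "exp (-(b/a)*(\<alpha>-t0)) * u \<alpha> \<le> u \<alpha>"
      using mult_nonneg_nonneg[of "exp (-(b/a)*(\<alpha>-t0)) - 1" "- u \<alpha>"] ua by (simp add: algebra_simps)
    hence "w t0 - u t0 \<ge> w \<alpha> - u \<alpha>" using ule wle by simp
    thus False using t0 eps by simp
  qed
  have "D \<alpha> < D \<beta>"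
  proof (rule incr_sub_strict[OF cD, of \<alpha> \<beta> "\<lambda>r. w r - u r"])
    fix t assume t: "\<alpha> < t" "t < \<beta>"
    have "w t - u t > \<epsilon>" using Pge t by auto
    thus "(D has_real_derivative w t - u t) (at t) \<and> 0 < w t - u t"
      using der(1)[of t] t al eps by auto
  qed (use al in auto)
  moreover have "u \<beta> \<le> 0"
  proof -
    have Dge: "D t \<ge> 0" if "\<alpha> \<le> t" "t \<le> \<beta>" for t
    proof -
      have "D \<alpha> \<le> D t"
      proof (rule incr_sub[OF cD, of \<alpha> t "\<lambda>r. w r - u r"])
        fix r assume r: "\<alpha> < r" "r < t"
        have "w r - u r > \<epsilon>" using Pge r that by auto
        thus "(D has_real_derivative w r - u r) (at r) \<and> 0 \<le> w r - u r"
          using der(1)[of r] r that al eps by auto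
      qed (use that al in auto)
      thus ?thesis using Da by simp
    qed
    have "u \<beta> \<le> exp (-(b/a)*(\<alpha>-\<beta>)) * u \<alpha>"
      by (rule g_decr[OF S]) (use al Dge in auto)
    also have "\<dots> \<le> 0" using ua by (simp add: mult_nonneg_nonpos)
    finally show ?thesis .
  qed
  ultimately show ?thesis by simp
qed

lemma lemF:
  assumes S: "sys a b c h L D u w" and al: "0 \<le> \<alpha>" "\<alpha> < \<beta>" "\<beta> \<le> L"
    and Da: "D \<alpha> \<ge> 0" and ua: "u \<alpha> \<le> 0" and wa: "w \<alpha> \<ge> 0" and nz: "D \<alpha> > 0 \<or> w \<alpha> - u \<alpha> > 0"
  shows "D \<beta> > 0 \<and> u \<beta> \<le> 0"
proof (cases "w \<alpha> - u \<alpha> > 0")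
  case True
  thus ?thesis using lemF0[OF S al Da ua wa] Da by auto
next
  case False
  hence Dp: "D \<alpha> > 0" using nz by simp
  note cD = sys_cont(1)[OF a b c h L S] and cw = sys_cont(3)[OF a b c h L S]
  note der = sys_der[OF a b c h L S]
  obtain d where d: "d > 0" "\<forall>y\<in>{0..L}. dist y \<alpha> < d \<longrightarrow> dist (D y) (D \<alpha>) < D \<alpha>"
    using cD Dp al unfolding continuous_on_iff by (metis atLeastAtMost_iff order_trans less_imp_le)
  define \<mu> where "\<mu> = min d (\<beta> - \<alpha>)"
  define \<alpha>' where "\<alpha>' = \<alpha> + \<mu> / 2"
  have "\<mu> > 0" "\<mu> \<le> d" "\<mu> \<le> \<beta> - \<alpha>" using d al unfolding \<mu>_def by auto
  hence a': "\<alpha> < \<alpha>'" "\<alpha>' < \<beta>" "\<alpha>' - \<alpha> < d" unfolding \<alpha>'_def by linarith+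
  have Dpos: "D y > 0" if "\<alpha> \<le> y" "y \<le> \<alpha>'" for y
  proof -
    have "dist (D y) (D \<alpha>) < D \<alpha>" using d(2) that a' al by (auto simp: dist_real_def)
    thus ?thesis by (auto simp: dist_real_def)
  qed
  have "w \<alpha> < w \<alpha>'"
  proof (rule incr_sub_strict[OF cw, of \<alpha> \<alpha>' "\<lambda>r. h * D r / c"])
    fix r assume r: "\<alpha> < r" "r < \<alpha>'"
    show "(w has_real_derivative h * D r / c) (at r) \<and> 0 < h * D r / c"
      using der(3)[of r] r a' al Dpos[of r] h c by auto
  qed (use a' al in auto)
  moreover have "u \<alpha>' \<le> exp (-(b/a)*(\<alpha>-\<alpha>')) * u \<alpha>"
  proof (rule g_decr[OF S])
    fix t assume "\<alpha> < t" "t < \<alpha>'"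
    thus "0 \<le> D t" using Dpos[of t] by simp
  qed (use a' al in auto)
  moreover have "exp (-(b/a)*(\<alpha>-\<alpha>')) * u \<alpha> \<le> 0" using ua by (simp add: mult_nonneg_nonpos)
  ultimately have "w \<alpha>' - u \<alpha>' > 0" "u \<alpha>' \<le> 0" "w \<alpha>' \<ge> 0" using wa by auto
  moreover have "D \<alpha>' > 0" using Dpos a' by simp
  ultimately have "D \<beta> > D \<alpha>' \<and> u \<beta> \<le> 0" using lemF0[OF S _ a'(2) al(3)] a' al by auto
  thus ?thesis using \<open>D \<alpha>' > 0\<close> by auto
qed

end


lemma two_mul_le: "\<bar>2*x*y\<bar> \<le> x*x + y*(y::real)"
proof -
  have "0 \<le> (\<bar>x\<bar> - \<bar>y\<bar>)^2" by simp
  hence "2*\<bar>x\<bar>*\<bar>y\<bar> \<le> x*x + y*y" by (simp add: power2_eq_square algebra_simps abs_mult_self_eq)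
  thus ?thesis by (simp add: abs_mult)
qed

context
  fixes a b c h L :: real
  assumes a: "0 < a" and b: "0 < b" and c: "0 < c" and h: "0 < h" and L: "0 < L"
begin

definition kk where "kk = 2 + 2*(b/a) + h/a + h/c"

lemma Vbound:
  fixes D u w :: real
  defines "V \<equiv> D*D + u*u + w*w"
  shows "\<bar>2*D*(w - u) + 2*u*((b*u - h*D)/a) + 2*w*(h*D/c)\<bar> \<le> kk * V"
proof -
  have eq: "2*D*(w - u) + 2*u*((b*u - h*D)/a) + 2*w*(h*D/c)
      = 2*D*w - 2*D*u + 2*(b/a)*(u*u) - (h/a)*(2*u*D) + (h/c)*(2*w*D)"
    using a c by (simp add: field_simps)
  have V: "D*D \<le> V" "u*u \<le> V" "w*w \<le> V" "D*D + u*u \<le> V" "D*D + w*w \<le> V" "0 \<le> V" unfolding V_def by auto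
  have b1: "\<bar>2*D*w\<bar> \<le> D*D + w*w" by (rule two_mul_le)
  have b2: "\<bar>2*D*u\<bar> \<le> D*D + u*u" by (rule two_mul_le)
  have b3: "\<bar>(h/a)*(2*u*D)\<bar> \<le> (h/a)*V"
  proof -
    have "\<bar>(h/a)*(2*u*D)\<bar> = (h/a)*\<bar>2*u*D\<bar>" using a h by (simp add: abs_mult)
    also have "\<dots> \<le> (h/a)*(u*u + D*D)" by (rule mult_left_mono[OF two_mul_le]) (use a h in simp)
    also have "\<dots> \<le> (h/a)*V" by (rule mult_left_mono) (use V a h in auto)
    finally show ?thesis .
  qed
  have b4: "\<bar>(h/c)*(2*w*D)\<bar> \<le> (h/c)*V"
  proof -
    have "\<bar>(h/c)*(2*w*D)\<bar> = (h/c)*\<bar>2*w*D\<bar>" using c h by (simp add: abs_mult)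
    also have "\<dots> \<le> (h/c)*(w*w + D*D)" by (rule mult_left_mono[OF two_mul_le]) (use c h in simp)
    also have "\<dots> \<le> (h/c)*V" by (rule mult_left_mono) (use V c h in auto)
    finally show ?thesis .
  qed
  have b5: "\<bar>2*(b/a)*(u*u)\<bar> \<le> 2*(b/a)*V"
  proof -
    have "\<bar>2*(b/a)*(u*u)\<bar> = 2*(b/a)*(u*u)" using a b by (simp add: abs_mult)
    also have "\<dots> \<le> 2*(b/a)*V" by (rule mult_left_mono) (use V a b in auto)
    finally show ?thesis .
  qed
  have "kk * V = 2*V + 2*(b/a)*V + (h/a)*V + (h/c)*V" unfolding kk_def by (simp add: algebra_simps)
  thus ?thesis unfolding eq using b1 b2 b3 b4 b5 V by linarith
qed

lemma kk_pos: "kk > 0" unfolding kk_def using a b c h by (simp add: add_pos_pos)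

lemma lemZ:
  assumes S: "sys a b c h L D u w" and t0: "0 \<le> t0" "t0 \<le> L" and z: "D t0 = 0" "u t0 = 0" "w t0 = 0"
    and y: "0 \<le> y" "y \<le> L"
  shows "D y = 0 \<and> u y = 0 \<and> w y = 0"
proof -
  note cD = sys_cont(1)[OF a b c h L S] and cu = sys_cont(2)[OF a b c h L S] and cw = sys_cont(3)[OF a b c h L S]
  note der = sys_der[OF a b c h L S]
  define V where "V y = D y * D y + u y * u y + w y * w y" for y
  define V' where "V' y = 2*D y*(w y - u y) + 2*u y*((b*u y - h*D y)/a) + 2*w y*(h*D y/c)" for y
  have cV: "continuous_on {0..L} V" unfolding V_def using cD cu cw by (auto intro!: continuous_intros)
  have dV: "(V has_real_derivative V' r) (at r)" if "0 < r" "r < L" for r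
    unfolding V_def V'_def
    by (auto intro!: derivative_eq_intros der[OF that] simp: algebra_simps)
  have Vb: "\<bar>V' r\<bar> \<le> kk * V r" for r unfolding V_def V'_def by (rule Vbound)
  have V0: "V t0 = 0" unfolding V_def using z by simp
  have Vnn: "V r \<ge> 0" for r unfolding V_def by simp
  have "V y \<le> 0"
  proof (cases "t0 \<le> y")
    case True
    have "(\<lambda>r. - (exp (- kk * r) * V r)) t0 \<le> (\<lambda>r. - (exp (- kk * r) * V r)) y"
    proof (rule incr_sub[of L _ t0 y "\<lambda>r. - (exp (- kk * r) * (V' r - kk * V r))"])
      show "continuous_on {0..L} (\<lambda>r. - (exp (- kk * r) * V r))" using cV by (auto intro!: continuous_intros)
      fix r assume r: "t0 < r" "r < y"
      have "V' r - kk * V r \<le> 0" using Vb[of r] by linarith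
      hence "0 \<le> - (exp (- kk * r) * (V' r - kk * V r))" by (simp add: mult_nonneg_nonpos)
      moreover have "((\<lambda>r. - (exp (- kk * r) * V r)) has_real_derivative - (exp (- kk * r) * (V' r - kk * V r))) (at r)"
        using r t0 y by (auto intro!: derivative_eq_intros dV simp: algebra_simps)
      ultimately show "((\<lambda>r. - (exp (- kk * r) * V r)) has_real_derivative - (exp (- kk * r) * (V' r - kk * V r))) (at r) \<and> 0 \<le> - (exp (- kk * r) * (V' r - kk * V r))" by simp
    qed (use True t0 y in auto)
    hence "exp (- kk * y) * V y \<le> 0" using V0 by simp
    thus ?thesis by (simp add: mult_le_0_iff)
  next
    case False
    have "(\<lambda>r. exp (kk * r) * V r) y \<le> (\<lambda>r. exp (kk * r) * V r) t0"
    proof (rule incr_sub[of L _ y t0 "\<lambda>r. exp (kk * r) * (V' r + kk * V r)"])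
      show "continuous_on {0..L} (\<lambda>r. exp (kk * r) * V r)" using cV by (auto intro!: continuous_intros)
      fix r assume r: "y < r" "r < t0"
      have "V' r + kk * V r \<ge> 0" using Vb[of r] by linarith
      hence "0 \<le> exp (kk * r) * (V' r + kk * V r)" by simp
      moreover have "((\<lambda>r. exp (kk * r) * V r) has_real_derivative exp (kk * r) * (V' r + kk * V r)) (at r)"
        using r t0 y by (auto intro!: derivative_eq_intros dV simp: algebra_simps)
      ultimately show "((\<lambda>r. exp (kk * r) * V r) has_real_derivative exp (kk * r) * (V' r + kk * V r)) (at r) \<and> 0 \<le> exp (kk * r) * (V' r + kk * V r)" by simp
    qed (use False t0 y in auto)
    hence "exp (kk * y) * V y \<le> 0" using V0 by simp
    thus ?thesis by (simp add: mult_le_0_iff)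
  qed
  hence "V y = 0" using Vnn[of y] by simp
  moreover have "0 \<le> D y * D y" "0 \<le> u y * u y" "0 \<le> w y * w y" by simp_all
  ultimately have "D y * D y = 0" "u y * u y = 0" "w y * w y = 0" unfolding V_def by linarith+
  thus ?thesis by simp
qed

end


context
  fixes a b c h L :: real
  assumes a: "0 < a" and b: "0 < b" and c: "0 < c" and h: "0 < h" and L: "0 < L"
begin

lemma q0_aux:
  assumes S: "sys a b c h L D u w" and D0: "D 0 = 0" and bc1: "b * u L = h * D L" and bc2: "c * w L + b * D L = 0"
    and DL: "D L \<le> 0"
  shows "D L = 0"
proof (rule ccontr)
  assume "D L \<noteq> 0"
  hence DL': "D L < 0" using DL by simp
  have "b * u L < 0" using bc1 DL' h by (simp add: mult_pos_neg)
  hence uL: "u L < 0" using b by (simp add: mult_less_0_iff)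
  have "c * w L > 0" using bc2 DL' b by (smt (verit) mult_pos_neg)
  hence wL: "w L > 0" using c by (simp add: zero_less_mult_iff)
  have "D 0 < 0" using lemB[OF a b c h L S _ L] DL uL wL by simp
  thus False using D0 by simp
qed

lemma sys_q0:
  assumes S: "sys a b c h L D u w" and D0: "D 0 = 0" and bc1: "b * u L = h * D L" and bc2: "c * w L + b * D L = 0"
    and y: "0 \<le> y" "y \<le> L"
  shows "D y = 0 \<and> u y = 0 \<and> w y = 0"
proof -
  have "D L \<le> 0 \<Longrightarrow> D L = 0" by (rule q0_aux[OF S D0 bc1 bc2])
  moreover have "D L \<ge> 0 \<Longrightarrow> D L = 0"
    using q0_aux[OF sys_neg[OF a b c h L S]] D0 bc1 bc2 by (simp add: algebra_simps)
  ultimately have DL: "D L = 0" by linarith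
  hence "u L = 0" "w L = 0" using bc1 bc2 b c by auto
  thus ?thesis using lemZ[OF a b c h L S _ _ DL _ _ y] L by simp
qed

lemma qpos_L:
  assumes S: "sys a b c h L D u w" and D0: "D 0 = 0" and bc1: "b * u L = h * D L" and bc2: "c * w L + b * D L = q"
    and q: "q > 0"
  shows "D L > 0" "u L > 0" "w L > 0"
proof -
  show DL: "D L > 0"
  proof (rule ccontr)
    assume "\<not> D L > 0"
    hence DL: "D L \<le> 0" by simp
    have "b * u L \<le> 0" using bc1 DL h by (simp add: mult_nonneg_nonpos)
    hence uL: "u L \<le> 0" using b by (simp add: mult_le_0_iff)
    have "b * D L \<le> 0" using DL b by (simp add: mult_nonneg_nonpos)
    hence "c * w L > 0" using bc2 q by linarith
    hence wL: "w L > 0" using c by (simp add: zero_less_mult_iff)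
    have "D 0 < 0" using lemB[OF a b c h L S _ L] DL uL wL by simp
    thus False using D0 by simp
  qed
  have "b * u L > 0" using bc1 DL h by simp
  thus uL: "u L > 0" using b by (simp add: zero_less_mult_iff)
  show "w L > 0"
  proof (rule ccontr)
    assume "\<not> w L > 0"
    hence "w L \<le> 0" by simp
    hence "- D 0 < 0" using lemB[OF a b c h L sys_neg[OF a b c h L S] _ L] DL uL by simp
    thus False using D0 by simp
  qed
qed

lemma qpos_u:
  assumes S: "sys a b c h L D u w" and D0: "D 0 = 0" and DL: "D L > 0" and uL: "u L > 0"
    and t: "0 \<le> t" "t < L" and ut: "u t = 0"
  shows False
proof -
  note SN = sys_neg[OF a b c h L S]
  consider (ca) "D t \<ge> 0" "w t \<ge> 0" "D t > 0 \<or> w t > 0" | (cb) "D t = 0" "w t = 0"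
    | (cc) "D t \<le> 0" "w t \<le> 0" "D t < 0 \<or> w t < 0" | (cd) "D t > 0" "w t < 0" | (ce) "D t < 0" "w t > 0"
    by (cases "D t" "0::real" rule: linorder_cases; cases "w t" "0::real" rule: linorder_cases) auto
  then show False
  proof cases
    case ca thus False using lemF[OF a b c h L S t(1) t(2) order.refl] ut uL by auto
  next
    case cb thus False using lemZ[OF a b c h L S, of t L] ut t L DL by auto
  next
    case cc thus False using lemF[OF a b c h L SN t(1) t(2) order.refl] ut DL by auto
  next
    case cd
    hence "t \<noteq> 0" using D0 by auto
    hence "0 < t" using t by simp
    thus False using lemB[OF a b c h L SN order.refl _ _] cd ut t D0 by force
  next
    case ce
    hence "t \<noteq> 0" using D0 by auto
    hence "0 < t" using t by simp
    thus False using lemB[OF a b c h L S order.refl _ _] ce ut t D0 by force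
  qed
qed

lemma qpos_w:
  assumes S: "sys a b c h L D u w" and D0: "D 0 = 0" and DL: "D L > 0" and uL: "u L > 0"
    and t: "0 \<le> t" "t < L" and wt: "w t = 0"
  shows False
proof -
  note SN = sys_neg[OF a b c h L S]
  consider (ca) "D t \<ge> 0" "u t \<le> 0" "D t > 0 \<or> u t < 0" | (cb) "D t = 0" "u t = 0"
    | (cc) "D t \<le> 0" "u t \<ge> 0" "D t < 0 \<or> u t > 0" | (cd) "D t > 0" "u t > 0" | (ce) "D t < 0" "u t < 0"
    by (cases "D t" "0::real" rule: linorder_cases; cases "u t" "0::real" rule: linorder_cases) auto
  then show False
  proof cases
    case ca thus False using lemF[OF a b c h L S t(1) t(2) order.refl] wt uL by auto
  next
    case cb thus False using lemZ[OF a b c h L S, of t L] wt t L DL by auto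
  next
    case cc thus False using lemF[OF a b c h L SN t(1) t(2) order.refl] wt DL by auto
  next
    case cd
    hence "t \<noteq> 0" using D0 by auto
    hence "0 < t" using t by simp
    thus False using lemB[OF a b c h L SN order.refl _ _] cd wt t D0 by force
  next
    case ce
    hence "t \<noteq> 0" using D0 by auto
    hence "0 < t" using t by simp
    thus False using lemB[OF a b c h L S order.refl _ _] ce wt t D0 by force
  qed
qed

end


context
  fixes a b c h L :: real
  assumes a: "0 < a" and b: "0 < b" and c: "0 < c" and h: "0 < h" and L: "0 < L"
begin

lemma sys_qpos:
  assumes S: "sys a b c h L D u w" and D0: "D 0 = 0" and bc1: "b * u L = h * D L" and bc2: "c * w L + b * D L = q"
    and q: "q > 0"
  shows "\<forall>y\<in>{0..L}. u y > 0 \<and> w y > 0" "\<forall>y\<in>{0<..L}. D y > 0"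
proof -
  note LL = qpos_L[OF a b c h L S D0 bc1 bc2 q]
  note cD = sys_cont(1)[OF a b c h L S] and cu = sys_cont(2)[OF a b c h L S] and cw = sys_cont(3)[OF a b c h L S]
  note der = sys_der[OF a b c h L S]
  have upos: "u y > 0" if y: "0 \<le> y" "y \<le> L" for y
  proof (rule ccontr)
    assume "\<not> u y > 0"
    hence "u y \<le> 0" by simp
    moreover have "continuous_on {y..L} u" by (rule continuous_on_subset[OF cu]) (use y in auto)
    ultimately obtain t where t: "y \<le> t" "t \<le> L" "u t = 0"
      using IVT'[of u y 0 L] LL(2) y by auto
    have "t \<noteq> L" using t LL by auto
    thus False using qpos_u[OF a b c h L S D0 LL(1) LL(2), of t] t y by simp
  qed
  have wpos: "w y > 0" if y: "0 \<le> y" "y \<le> L" for y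
  proof (rule ccontr)
    assume "\<not> w y > 0"
    hence "w y \<le> 0" by simp
    moreover have "continuous_on {y..L} w" by (rule continuous_on_subset[OF cw]) (use y in auto)
    ultimately obtain t where t: "y \<le> t" "t \<le> L" "w t = 0"
      using IVT'[of w y 0 L] LL(3) y by auto
    have "t \<noteq> L" using t LL by auto
    thus False using qpos_w[OF a b c h L S D0 LL(1) LL(2), of t] t y by simp
  qed
  show "\<forall>y\<in>{0..L}. u y > 0 \<and> w y > 0" using upos wpos by auto
  show "\<forall>y\<in>{0<..L}. D y > 0"
  proof (rule ccontr)
    assume "\<not> (\<forall>y\<in>{0<..L}. D y > 0)"
    then obtain y where y: "0 < y" "y \<le> L" "D y \<le> 0" by auto
    obtain tm where tm: "tm \<in> {0..L}" "\<forall>z\<in>{0..L}. D tm \<le> D z"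
      using continuous_attains_inf[OF compact_Icc _ cD] L by auto
    obtain t1 where t1: "0 < t1" "t1 \<le> L" "D t1 \<le> 0" "\<forall>z\<in>{0..L}. D t1 \<le> D z"
    proof (cases "tm = 0")
      case True
      have "D y \<ge> D 0" using tm True y by auto
      hence "D y = 0" using y D0 by simp
      thus ?thesis using that[of y] y tm True D0 by auto
    next
      case False
      have "D tm \<le> D y" using tm y by auto
      hence "D tm \<le> 0" using y by linarith
      moreover have "0 < tm" using tm False by auto
      ultimately show ?thesis using that[of tm] tm by auto
    qed
    have "t1 \<noteq> L" using t1 LL by auto
    hence t1L: "t1 < L" using t1 by simp
    define d where "d = min t1 (L - t1)"
    have d: "d > 0" using t1 t1L unfolding d_def by auto
    have "w t1 - u t1 = 0"
    proof (rule DERIV_local_min[OF der(1)[OF t1(1) t1L] d])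
      show "\<forall>z. \<bar>t1 - z\<bar> < d \<longrightarrow> D t1 \<le> D z"
      proof (intro allI impI)
        fix z assume "\<bar>t1 - z\<bar> < d"
        hence "z \<in> {0..L}" unfolding d_def by (auto simp: abs_less_iff)
        thus "D t1 \<le> D z" using t1 by auto
      qed
    qed
    hence P0: "w t1 - u t1 = 0" .
    have dP: "((\<lambda>r. w r - u r) has_real_derivative (h * D t1 / c - (b * u t1 - h * D t1) / a)) (at t1)"
      using der(3)[OF t1(1) t1L] der(2)[OF t1(1) t1L] by (rule DERIV_diff)
    have "h * D t1 / c \<le> 0" using t1 h c by (simp add: divide_nonpos_pos mult_nonneg_nonpos)
    moreover have "(b * u t1 - h * D t1) / a > 0"
    proof -
      have "b * u t1 > 0" using upos[of t1] t1 b by simp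
      moreover have "h * D t1 \<le> 0" using t1 h by (simp add: mult_nonneg_nonpos)
      ultimately show ?thesis using a by simp
    qed
    ultimately have "h * D t1 / c - (b * u t1 - h * D t1) / a < 0" by simp
    then obtain e where e: "e > 0" "\<forall>hh>0. hh < e \<longrightarrow> w t1 - u t1 < w (t1 - hh) - u (t1 - hh)"
      using DERIV_neg_dec_left[OF dP] by auto
    define e' where "e' = min e t1 / 2"
    have e': "0 < e'" "e' < e" "e' < t1" using e t1 unfolding e'_def by auto
    have "D (t1 - e') < D t1"
    proof (rule incr_sub_strict[OF cD, of "t1 - e'" t1 "\<lambda>r. w r - u r"])
      fix r assume r: "t1 - e' < r" "r < t1"
      have "t1 - r > 0" "t1 - r < e" using r e' by auto
      hence "w t1 - u t1 < w (t1 - (t1 - r)) - u (t1 - (t1 - r))" using e(2) by blast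
      hence "0 < w r - u r" using P0 by simp
      thus "(D has_real_derivative w r - u r) (at r) \<and> 0 < w r - u r" using der(1)[of r] r e' t1L by auto
    qed (use e' t1L in auto)
    moreover have "D t1 \<le> D (t1 - e')" using t1 e' by auto
    ultimately show False by simp
  qed
qed

end


lemma bvp_sys:
  fixes L \<phi> \<kappa>f \<kappa>s hv cpf mc Ac Tb qHG :: real
  assumes pos: "0 < L" "0 < \<phi>" "\<phi> < 1" "0 < \<kappa>f" "0 < \<kappa>s" "0 < hv" "0 < cpf" "0 < mc" "0 < Ac"
    and B: "bvp_solution L \<phi> \<kappa>f \<kappa>s hv cpf mc Ac Tb qHG Tf Ts"
  obtains Tf' Ts' where
    "sys (\<phi>*\<kappa>f) (cpf*(mc/Ac)) ((1-\<phi>)*\<kappa>s) hv L (\<lambda>y. Ts y - Tf y) Tf' Ts'"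
    "\<forall>y\<in>{0<..<L}. (Tf has_real_derivative Tf' y) (at y)" "continuous_on {0..L} Tf"
    "\<forall>y\<in>{0<..<L}. (Ts has_real_derivative Ts' y) (at y)" "continuous_on {0..L} Ts"
    "Tf 0 = Tb" "Ts 0 = Tb"
    "cpf*(mc/Ac) * Tf' L = hv * (Ts L - Tf L)"
    "(1-\<phi>)*\<kappa>s * Ts' L + cpf*(mc/Ac) * (Ts L - Tf L) = qHG"
proof -
  obtain Tf' Ts' Tf'' Ts'' where
    d1: "\<forall>y\<in>{0..L}. (Tf has_real_derivative Tf' y) (at y within {0..L})" and
    d2: "\<forall>y\<in>{0..L}. (Ts has_real_derivative Ts' y) (at y within {0..L})" and
    c1: "continuous_on {0..L} Tf'" and c2: "continuous_on {0..L} Ts'" and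
    d3: "\<forall>y\<in>{0<..<L}. (Tf' has_real_derivative Tf'' y) (at y)" and
    d4: "\<forall>y\<in>{0<..<L}. (Ts' has_real_derivative Ts'' y) (at y)" and
    e1: "\<forall>y\<in>{0<..<L}. - \<phi> * \<kappa>f * Tf'' y + cpf * (mc / Ac) * Tf' y = hv * (Ts y - Tf y)" and
    e2: "\<forall>y\<in>{0<..<L}. (1 - \<phi>) * \<kappa>s * Ts'' y = hv * (Ts y - Tf y)" and
    i1: "Tf 0 = Tb" and i2: "Ts 0 = Tb" and
    b1: "(1 - \<phi>) * \<kappa>s * Ts' L = qHG - cpf * (mc / Ac) * (Ts L - Tf L)" and
    b2: "Tf' L = (hv * Ac) / (cpf * mc) * (Ts L - Tf L)"
    using B unfolding bvp_solution_def by blast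
  have cf: "continuous_on {0..L} Tf" by (rule DERIV_continuous_on) (use d1 in auto)
  have cs: "continuous_on {0..L} Ts" by (rule DERIV_continuous_on) (use d2 in auto)
  have af: "\<forall>y\<in>{0<..<L}. (Tf has_real_derivative Tf' y) (at y)"
  proof
    fix y :: real assume y: "y \<in> {0<..<L}"
    hence "(Tf has_real_derivative Tf' y) (at y within {0..L})" using d1 by auto
    moreover have "at y within {0..L} = at y" using y by (intro at_within_Icc_at) auto
    ultimately show "(Tf has_real_derivative Tf' y) (at y)" by simp
  qed
  have as: "\<forall>y\<in>{0<..<L}. (Ts has_real_derivative Ts' y) (at y)"
  proof
    fix y :: real assume y: "y \<in> {0<..<L}"
    hence "(Ts has_real_derivative Ts' y) (at y within {0..L})" using d2 by auto
    moreover have "at y within {0..L} = at y" using y by (intro at_within_Icc_at) auto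
    ultimately show "(Ts has_real_derivative Ts' y) (at y)" by simp
  qed
  have pa: "\<phi>*\<kappa>f > 0" "(1-\<phi>)*\<kappa>s > 0" using pos by auto
  have S: "sys (\<phi>*\<kappa>f) (cpf*(mc/Ac)) ((1-\<phi>)*\<kappa>s) hv L (\<lambda>y. Ts y - Tf y) Tf' Ts'"
    unfolding sys_def
  proof (intro conjI ballI)
    show "continuous_on {0..L} (\<lambda>y. Ts y - Tf y)" using cf cs by (auto intro!: continuous_intros)
    show "continuous_on {0..L} Tf'" "continuous_on {0..L} Ts'" using c1 c2 by auto
    fix y assume y: "y \<in> {0<..<L}"
    show "((\<lambda>y. Ts y - Tf y) has_real_derivative Ts' y - Tf' y) (at y)"
      using af as y by (auto intro!: derivative_eq_intros)
    have "Tf'' y = (cpf * (mc / Ac) * Tf' y - hv * (Ts y - Tf y)) / (\<phi> * \<kappa>f)"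
      using e1 y pa by (auto simp: field_simps)
    moreover have "(Tf' has_real_derivative Tf'' y) (at y)" using d3 y by blast
    ultimately show "(Tf' has_real_derivative (cpf * (mc / Ac) * Tf' y - hv * (Ts y - Tf y)) / (\<phi> * \<kappa>f)) (at y)"
      by simp
    have "(1 - \<phi>) * \<kappa>s * Ts'' y = hv * (Ts y - Tf y)" using e2 y by blast
    hence "Ts'' y = hv * (Ts y - Tf y) / ((1 - \<phi>) * \<kappa>s)"
      using pa(2) by (metis nonzero_mult_div_cancel_left less_irrefl)
    moreover have "(Ts' has_real_derivative Ts'' y) (at y)" using d4 y by blast
    ultimately show "(Ts' has_real_derivative hv * (Ts y - Tf y) / ((1 - \<phi>) * \<kappa>s)) (at y)"
      by simp
  qed
  have "cpf*(mc/Ac) * Tf' L = hv * (Ts L - Tf L)" using b2 pos by (simp add: field_simps)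
  moreover have "(1-\<phi>)*\<kappa>s * Ts' L + cpf*(mc/Ac) * (Ts L - Tf L) = qHG" using b1 by simp
  ultimately show ?thesis using that[OF S af cf as cs i1 i2] by blast
qed

lemma const_from_deriv:
  assumes "continuous_on {0..L} f" "\<forall>y\<in>{0<..<L}. (f has_real_derivative f' y) (at y)"
    "\<forall>y\<in>{0..L}. f' y = 0" "0 \<le> y" "y \<le> L"
  shows "f y = f 0"
proof -
  have d0: "(f has_real_derivative 0) (at t)" if "0 < t" "t < L" for t
    using assms(2,3) that by force
  have "f 0 \<le> f y" by (rule incr_sub[OF assms(1), of 0 y "\<lambda>_. 0"]) (use d0 assms(4,5) in auto)
  moreover have "(\<lambda>y. - f y) 0 \<le> (\<lambda>y. - f y) y"
  proof (rule incr_sub[of L _ 0 y "\<lambda>_. 0"])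
    show "continuous_on {0..L} (\<lambda>y. - f y)" using assms(1) by (rule continuous_on_minus)
    fix t assume "0 < t" "t < y"
    thus "((\<lambda>y. - f y) has_real_derivative 0) (at t) \<and> (0::real) \<le> 0"
      using DERIV_minus[OF d0[of t]] assms(5) by simp
  qed (use assms in auto)
  ultimately show ?thesis by simp
qed

lemma sys_diff:
  assumes "sys a b c h L D1 u1 w1" "sys a b c h L D2 u2 w2"
  shows "sys a b c h L (\<lambda>y. D1 y - D2 y) (\<lambda>y. u1 y - u2 y) (\<lambda>y. w1 y - w2 y)"
  unfolding sys_def
proof (intro conjI ballI)
  show "continuous_on {0..L} (\<lambda>y. D1 y - D2 y)" "continuous_on {0..L} (\<lambda>y. u1 y - u2 y)" "continuous_on {0..L} (\<lambda>y. w1 y - w2 y)"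
    using assms unfolding sys_def by (auto intro!: continuous_intros)
  fix y assume y: "y \<in> {0<..<L}"
  have A: "(D1 has_real_derivative (w1 y - u1 y)) (at y)" "(u1 has_real_derivative ((b * u1 y - h * D1 y) / a)) (at y)"
    "(w1 has_real_derivative (h * D1 y / c)) (at y)" using assms(1) y unfolding sys_def by auto
  have B: "(D2 has_real_derivative (w2 y - u2 y)) (at y)" "(u2 has_real_derivative ((b * u2 y - h * D2 y) / a)) (at y)"
    "(w2 has_real_derivative (h * D2 y / c)) (at y)" using assms(2) y unfolding sys_def by auto
  show "((\<lambda>y. D1 y - D2 y) has_real_derivative (w1 y - w2 y) - (u1 y - u2 y)) (at y)"
    using DERIV_diff[OF A(1) B(1)] by (simp add: algebra_simps)
  show "((\<lambda>y. u1 y - u2 y) has_real_derivative (b * (u1 y - u2 y) - h * (D1 y - D2 y)) / a) (at y)"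
  proof -
    have "(b * u1 y - h * D1 y) / a - (b * u2 y - h * D2 y) / a = (b * (u1 y - u2 y) - h * (D1 y - D2 y)) / a"
      unfolding diff_divide_distrib[symmetric] by (simp add: algebra_simps)
    thus ?thesis using DERIV_diff[OF A(2) B(2)] by simp
  qed
  show "((\<lambda>y. w1 y - w2 y) has_real_derivative h * (D1 y - D2 y) / c) (at y)"
  proof -
    have "h * D1 y / c - h * D2 y / c = h * (D1 y - D2 y) / c"
      unfolding diff_divide_distrib[symmetric] by (simp add: algebra_simps)
    thus ?thesis using DERIV_diff[OF A(3) B(3)] by simp
  qed
qed



lemma cubic_bounds:
  fixes a b c h :: real
  assumes a: "0 < a" and b: "0 < b" and c: "0 < c" and h: "0 < h"
  defines "M \<equiv> 1 + b/a + (b*c + h*(a+c) + b*h)/(a*c)"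
  shows "a*c*M^3 - b*c*M^2 - h*(a+c)*M + b*h > 0"
    "a*c*(-M)^3 - b*c*(-M)^2 - h*(a+c)*(-M) + b*h < 0"
    "M > b/a"
proof -
  have ac: "a*c > 0" using a c by simp
  have M1: "M \<ge> 1" unfolding M_def using a b c h by (auto intro!: add_nonneg_nonneg)
  have "a*c*M = a*c + a*c*(b/a) + a*c*((b*c + h*(a+c) + b*h)/(a*c))" unfolding M_def
    by (simp add: distrib_left)
  also have "a*c*((b*c + h*(a+c) + b*h)/(a*c)) = b*c + h*(a+c) + b*h" using ac by (metis less_irrefl nonzero_mult_div_cancel_left times_divide_eq_right)
  finally have "a*c*M = a*c + a*c*(b/a) + (b*c + h*(a+c) + b*h)" .
  hence K: "a*c*M > b*c + h*(a+c) + b*h" using ac a b c by (simp add: add_pos_pos)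
  have MM: "M \<le> M^2" "1 \<le> M^2" using M1 by (auto simp: power2_eq_square intro: mult_left_mono[of 1 M M, simplified] order_trans)
  have M2: "M^2 > 0" using M1 by simp
  have "a*c*M^3 - b*c*M^2 - h*(a+c)*M + b*h \<ge> a*c*M^3 - b*c*M^2 - h*(a+c)*M^2"
  proof -
    have "h*(a+c)*M \<le> h*(a+c)*M^2" using MM a c h by (intro mult_left_mono) auto
    thus ?thesis using b h by (smt (verit) mult_pos_pos)
  qed
  moreover have "a*c*M^3 - b*c*M^2 - h*(a+c)*M^2 = M^2 * (a*c*M - b*c - h*(a+c))"
    by (simp add: power3_eq_cube power2_eq_square algebra_simps)
  moreover have "a*c*M - b*c - h*(a+c) > 0" using K mult_pos_pos[OF b h] by linarith
  hence "M^2 * (a*c*M - b*c - h*(a+c)) > 0" using M2 by simp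
  ultimately show "a*c*M^3 - b*c*M^2 - h*(a+c)*M + b*h > 0" by linarith
  have "a*c*(-M)^3 - b*c*(-M)^2 - h*(a+c)*(-M) + b*h = - a*c*M^3 - b*c*M^2 + h*(a+c)*M + b*h"
    by (simp add: power3_eq_cube power2_eq_square)
  also have "\<dots> \<le> - a*c*M^3 + h*(a+c)*M^2 + b*h*M^2"
  proof -
    have "h*(a+c)*M \<le> h*(a+c)*M^2" using MM a c h by (intro mult_left_mono) auto
    moreover have "b*h*1 \<le> b*h*M^2" using MM b h by (intro mult_left_mono) auto
    moreover have "b*c*M^2 \<ge> 0" using b c by simp
    ultimately show ?thesis by linarith
  qed
  also have "\<dots> = M^2 * (h*(a+c) + b*h - a*c*M)"
    by (simp add: power3_eq_cube power2_eq_square algebra_simps)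
  also have "\<dots> < 0"
  proof -
    have "h*(a+c) + b*h - a*c*M < 0" using K mult_pos_pos[OF b c] by linarith
    thus ?thesis using M2 by (simp add: mult_pos_neg)
  qed
  finally show "a*c*(-M)^3 - b*c*(-M)^2 - h*(a+c)*(-M) + b*h < 0" .
  show "M > b/a" unfolding M_def using a b c h by (auto intro!: add_pos_pos divide_pos_pos)
qed

lemma cubic_roots:
  fixes a b c h :: real
  assumes a: "0 < a" and b: "0 < b" and c: "0 < c" and h: "0 < h"
  obtains l1 l2 l3 where
    "a*c*l1^3 - b*c*l1^2 - h*(a+c)*l1 + b*h = 0"
    "a*c*l2^3 - b*c*l2^2 - h*(a+c)*l2 + b*h = 0"
    "a*c*l3^3 - b*c*l3^2 - h*(a+c)*l3 + b*h = 0"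
    "l1 < 0" "0 < l2" "l2 < b/a" "b/a < l3"
proof -
  define p where "p x = a*c*x^3 - b*c*x^2 - h*(a+c)*x + b*h" for x
  define M where "M = 1 + b/a + (b*c + h*(a+c) + b*h)/(a*c)"
  have pM: "p M > 0" "p (-M) < 0" "M > b/a" unfolding p_def M_def using cubic_bounds[OF a b c h] by auto
  have p0: "p 0 > 0" unfolding p_def using b h by simp
  have pb: "p (b/a) < 0"
  proof -
    have "p (b/a) = - h*c*b/a" unfolding p_def using a by (simp add: power3_eq_cube power2_eq_square field_simps)
    thus ?thesis using a b c h by simp
  qed
  have cp: "continuous_on S p" for S unfolding p_def by (intro continuous_intros)
  have "b/a > 0" using a b by simp
  obtain l1 where l1: "-M \<le> l1" "l1 \<le> 0" "p l1 = 0"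
    using IVT'[of p "-M" 0 0] pM p0 cp \<open>b/a > 0\<close> by force
  obtain l2 where l2: "0 \<le> l2" "l2 \<le> b/a" "p l2 = 0"
    using IVT2[of p "b/a" 0 0] pb p0 \<open>b/a > 0\<close> continuous_on_eq_continuous_at[of UNIV p] cp by force
  obtain l3 where l3: "b/a \<le> l3" "l3 \<le> M" "p l3 = 0"
    using IVT'[of p "b/a" 0 M] pM pb cp by force
  have "l1 \<noteq> 0" "l2 \<noteq> 0" "l2 \<noteq> b/a" "l3 \<noteq> b/a" using l1 l2 l3 p0 pb by auto
  thus ?thesis using that[of l1 l2 l3] l1 l2 l3 unfolding p_def by auto
qed



definition TS :: "real \<Rightarrow> real \<Rightarrow> real \<Rightarrow> real \<Rightarrow> real \<Rightarrow> real \<Rightarrow> real \<Rightarrow> real \<Rightarrow> real \<Rightarrow> real" where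
  "TS h k0 k1 k2 k3 l1 l2 l3 y = k0 + h*k1*exp(l1*y) + h*k2*exp(l2*y) + h*k3*exp(l3*y)"
definition TS1 :: "real \<Rightarrow> real \<Rightarrow> real \<Rightarrow> real \<Rightarrow> real \<Rightarrow> real \<Rightarrow> real \<Rightarrow> real \<Rightarrow> real" where
  "TS1 h k1 k2 k3 l1 l2 l3 y = h*k1*l1*exp(l1*y) + h*k2*l2*exp(l2*y) + h*k3*l3*exp(l3*y)"
definition TS2 :: "real \<Rightarrow> real \<Rightarrow> real \<Rightarrow> real \<Rightarrow> real \<Rightarrow> real \<Rightarrow> real \<Rightarrow> real \<Rightarrow> real" where
  "TS2 h k1 k2 k3 l1 l2 l3 y = h*k1*(l1*l1)*exp(l1*y) + h*k2*(l2*l2)*exp(l2*y) + h*k3*(l3*l3)*exp(l3*y)"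
definition TF :: "real \<Rightarrow> real \<Rightarrow> real \<Rightarrow> real \<Rightarrow> real \<Rightarrow> real \<Rightarrow> real \<Rightarrow> real \<Rightarrow> real \<Rightarrow> real \<Rightarrow> real" where
  "TF c h k0 k1 k2 k3 l1 l2 l3 y = k0 + k1*(h - c*(l1*l1))*exp(l1*y) + k2*(h - c*(l2*l2))*exp(l2*y) + k3*(h - c*(l3*l3))*exp(l3*y)"
definition TF1 :: "real \<Rightarrow> real \<Rightarrow> real \<Rightarrow> real \<Rightarrow> real \<Rightarrow> real \<Rightarrow> real \<Rightarrow> real \<Rightarrow> real \<Rightarrow> real" where
  "TF1 c h k1 k2 k3 l1 l2 l3 y = k1*(h - c*(l1*l1))*l1*exp(l1*y) + k2*(h - c*(l2*l2))*l2*exp(l2*y) + k3*(h - c*(l3*l3))*l3*exp(l3*y)"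
definition TF2 :: "real \<Rightarrow> real \<Rightarrow> real \<Rightarrow> real \<Rightarrow> real \<Rightarrow> real \<Rightarrow> real \<Rightarrow> real \<Rightarrow> real \<Rightarrow> real" where
  "TF2 c h k1 k2 k3 l1 l2 l3 y = k1*(h - c*(l1*l1))*(l1*l1)*exp(l1*y) + k2*(h - c*(l2*l2))*(l2*l2)*exp(l2*y) + k3*(h - c*(l3*l3))*(l3*l3)*exp(l3*y)"

lemma TS_der: "(TS h k0 k1 k2 k3 l1 l2 l3 has_real_derivative TS1 h k1 k2 k3 l1 l2 l3 y) (at y)"
  unfolding TS_def TS1_def by (auto intro!: derivative_eq_intros simp: algebra_simps)
lemma TS1_der: "(TS1 h k1 k2 k3 l1 l2 l3 has_real_derivative TS2 h k1 k2 k3 l1 l2 l3 y) (at y)"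
  unfolding TS1_def TS2_def by (auto intro!: derivative_eq_intros simp: algebra_simps)
lemma TF_der: "(TF c h k0 k1 k2 k3 l1 l2 l3 has_real_derivative TF1 c h k1 k2 k3 l1 l2 l3 y) (at y)"
  unfolding TF_def TF1_def by (auto intro!: derivative_eq_intros simp: algebra_simps)
lemma TF1_der: "(TF1 c h k1 k2 k3 l1 l2 l3 has_real_derivative TF2 c h k1 k2 k3 l1 l2 l3 y) (at y)"
  unfolding TF1_def TF2_def by (auto intro!: derivative_eq_intros simp: algebra_simps)

lemma TS_cont: "continuous_on S (TS h k0 k1 k2 k3 l1 l2 l3)"
  unfolding TS_def by (intro continuous_intros)
lemma TS1_cont: "continuous_on S (TS1 h k1 k2 k3 l1 l2 l3)"
  unfolding TS1_def by (intro continuous_intros)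
lemma TF_cont: "continuous_on S (TF c h k0 k1 k2 k3 l1 l2 l3)"
  unfolding TF_def by (intro continuous_intros)
lemma TF1_cont: "continuous_on S (TF1 c h k1 k2 k3 l1 l2 l3)"
  unfolding TF1_def by (intro continuous_intros)

lemma mode_id:
  fixes a b c h l :: real
  assumes "a*c*l^3 - b*c*l^2 - h*(a+c)*l + b*h = 0"
  shows "-a*((h - c*(l*l))*(l*l)) + b*((h - c*(l*l))*l) = h*(c*(l*l))"
proof -
  have "-a*((h - c*(l*l))*(l*l)) + b*((h - c*(l*l))*l) - h*(c*(l*l)) = l * (a*c*l^3 - b*c*l^2 - h*(a+c)*l + b*h)"
    by (simp add: power3_eq_cube power2_eq_square algebra_simps)
  thus ?thesis using assms by simp
qed

lemma TF_ode:
  fixes a b c h l1 l2 l3 :: real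
  assumes "a*c*l1^3 - b*c*l1^2 - h*(a+c)*l1 + b*h = 0"
    "a*c*l2^3 - b*c*l2^2 - h*(a+c)*l2 + b*h = 0"
    "a*c*l3^3 - b*c*l3^2 - h*(a+c)*l3 + b*h = 0"
  shows "- a * TF2 c h k1 k2 k3 l1 l2 l3 y + b * TF1 c h k1 k2 k3 l1 l2 l3 y
     = h * (TS h k0 k1 k2 k3 l1 l2 l3 y - TF c h k0 k1 k2 k3 l1 l2 l3 y)"
proof -
  have "- a * TF2 c h k1 k2 k3 l1 l2 l3 y + b * TF1 c h k1 k2 k3 l1 l2 l3 y
    = k1*exp(l1*y)*(-a*((h - c*(l1*l1))*(l1*l1)) + b*((h - c*(l1*l1))*l1))
    + k2*exp(l2*y)*(-a*((h - c*(l2*l2))*(l2*l2)) + b*((h - c*(l2*l2))*l2))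
    + k3*exp(l3*y)*(-a*((h - c*(l3*l3))*(l3*l3)) + b*((h - c*(l3*l3))*l3))"
    unfolding TF1_def TF2_def by (simp add: algebra_simps)
  also have "\<dots> = k1*exp(l1*y)*(h*(c*(l1*l1))) + k2*exp(l2*y)*(h*(c*(l2*l2))) + k3*exp(l3*y)*(h*(c*(l3*l3)))"
    using mode_id[OF assms(1)] mode_id[OF assms(2)] mode_id[OF assms(3)] by simp
  also have "\<dots> = h * (TS h k0 k1 k2 k3 l1 l2 l3 y - TF c h k0 k1 k2 k3 l1 l2 l3 y)"
    unfolding TS_def TF_def by (simp add: algebra_simps)
  finally show ?thesis .
qed

lemma TS_ode: "c * TS2 h k1 k2 k3 l1 l2 l3 y = h * (TS h k0 k1 k2 k3 l1 l2 l3 y - TF c h k0 k1 k2 k3 l1 l2 l3 y)"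
  unfolding TS_def TF_def TS2_def by (simp add: algebra_simps)



definition Mmap :: "real \<Rightarrow> real \<Rightarrow> real \<Rightarrow> real \<Rightarrow> real \<Rightarrow> real \<Rightarrow> real \<Rightarrow> real \<times> real \<times> real \<times> real \<Rightarrow> real \<times> real \<times> real \<times> real" where
  "Mmap b c h L l1 l2 l3 k = (let k0 = fst k; k1 = fst (snd k); k2 = fst (snd (snd k)); k3 = snd (snd (snd k)) in
     (TF c h k0 k1 k2 k3 l1 l2 l3 0, TS h k0 k1 k2 k3 l1 l2 l3 0,
      c * TS1 h k1 k2 k3 l1 l2 l3 L + b * (TS h k0 k1 k2 k3 l1 l2 l3 L - TF c h k0 k1 k2 k3 l1 l2 l3 L),
      TF1 c h k1 k2 k3 l1 l2 l3 L - (h/b) * (TS h k0 k1 k2 k3 l1 l2 l3 L - TF c h k0 k1 k2 k3 l1 l2 l3 L)))"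

lemma Mmap_linear: "linear (Mmap b c h L l1 l2 l3)"
proof (rule linearI)
  fix x y :: "real \<times> real \<times> real \<times> real"
  show "Mmap b c h L l1 l2 l3 (x + y) = Mmap b c h L l1 l2 l3 x + Mmap b c h L l1 l2 l3 y"
    unfolding Mmap_def Let_def TS_def TF_def TS1_def TF1_def by (simp add: algebra_simps)
next
  fix r :: real and x :: "real \<times> real \<times> real \<times> real"
  show "Mmap b c h L l1 l2 l3 (r *\<^sub>R x) = r *\<^sub>R Mmap b c h L l1 l2 l3 x"
    unfolding Mmap_def Let_def TS_def TF_def TS1_def TF1_def by (simp add: algebra_simps)
qed

context
  fixes a b c h L l1 l2 l3 :: real
  assumes a: "0 < a" and b: "0 < b" and c: "0 < c" and h: "0 < h" and L: "0 < L"
    and r1: "a*c*l1^3 - b*c*l1^2 - h*(a+c)*l1 + b*h = 0"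
    and r2: "a*c*l2^3 - b*c*l2^2 - h*(a+c)*l2 + b*h = 0"
    and r3: "a*c*l3^3 - b*c*l3^2 - h*(a+c)*l3 + b*h = 0"
    and ll: "l1 < 0" "0 < l2" "l2 < b/a" "b/a < l3"
begin

lemma sol_sys:
  "sys a b c h L (\<lambda>y. TS h k0 k1 k2 k3 l1 l2 l3 y - TF c h k0 k1 k2 k3 l1 l2 l3 y)
     (TF1 c h k1 k2 k3 l1 l2 l3) (TS1 h k1 k2 k3 l1 l2 l3)"
  unfolding sys_def
proof (intro conjI ballI)
  show "continuous_on {0..L} (\<lambda>y. TS h k0 k1 k2 k3 l1 l2 l3 y - TF c h k0 k1 k2 k3 l1 l2 l3 y)"
    using TS_cont TF_cont by (rule continuous_on_diff)
  show "continuous_on {0..L} (TF1 c h k1 k2 k3 l1 l2 l3)" "continuous_on {0..L} (TS1 h k1 k2 k3 l1 l2 l3)"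
    by (rule TF1_cont TS1_cont)+
  fix y assume y: "y \<in> {0<..<L}"
  show "((\<lambda>y. TS h k0 k1 k2 k3 l1 l2 l3 y - TF c h k0 k1 k2 k3 l1 l2 l3 y) has_real_derivative
      TS1 h k1 k2 k3 l1 l2 l3 y - TF1 c h k1 k2 k3 l1 l2 l3 y) (at y)"
    by (rule DERIV_diff[OF TS_der TF_der])
  have "TF2 c h k1 k2 k3 l1 l2 l3 y = (b * TF1 c h k1 k2 k3 l1 l2 l3 y -
      h * (TS h k0 k1 k2 k3 l1 l2 l3 y - TF c h k0 k1 k2 k3 l1 l2 l3 y)) / a"
    using TF_ode[OF r1 r2 r3, of k1 k2 k3 y k0] a by (simp add: field_simps)
  thus "(TF1 c h k1 k2 k3 l1 l2 l3 has_real_derivative (b * TF1 c h k1 k2 k3 l1 l2 l3 y -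
      h * (TS h k0 k1 k2 k3 l1 l2 l3 y - TF c h k0 k1 k2 k3 l1 l2 l3 y)) / a) (at y)"
    using TF1_der[of c h k1 k2 k3 l1 l2 l3 y] by simp
  have "TS2 h k1 k2 k3 l1 l2 l3 y = h * (TS h k0 k1 k2 k3 l1 l2 l3 y - TF c h k0 k1 k2 k3 l1 l2 l3 y) / c"
    using TS_ode[of c h k1 k2 k3 l1 l2 l3 y k0] c by (simp add: field_simps)
  thus "(TS1 h k1 k2 k3 l1 l2 l3 has_real_derivative
      h * (TS h k0 k1 k2 k3 l1 l2 l3 y - TF c h k0 k1 k2 k3 l1 l2 l3 y) / c) (at y)"
    using TS1_der[of h k1 k2 k3 l1 l2 l3 y] by simp
qed

lemma Mmap_kernel:
  assumes "Mmap b c h L l1 l2 l3 (k0, k1, k2, k3) = 0"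
  shows "k0 = 0 \<and> k1 = 0 \<and> k2 = 0 \<and> k3 = 0"
proof -
  let ?D = "\<lambda>y. TS h k0 k1 k2 k3 l1 l2 l3 y - TF c h k0 k1 k2 k3 l1 l2 l3 y"
  have E: "TF c h k0 k1 k2 k3 l1 l2 l3 0 = 0" "TS h k0 k1 k2 k3 l1 l2 l3 0 = 0"
    "c * TS1 h k1 k2 k3 l1 l2 l3 L + b * ?D L = 0"
    "TF1 c h k1 k2 k3 l1 l2 l3 L - (h/b) * ?D L = 0"
    using assms unfolding Mmap_def Let_def by (simp_all add: zero_prod_def)
  have D0: "?D 0 = 0" using E by simp
  have bc1: "b * TF1 c h k1 k2 k3 l1 l2 l3 L = h * ?D L" using E(4) b by (simp add: field_simps)
  have "?D 0 = 0 \<and> TF1 c h k1 k2 k3 l1 l2 l3 0 = 0 \<and> TS1 h k1 k2 k3 l1 l2 l3 0 = 0"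
    by (rule sys_q0[OF a b c h L sol_sys D0 bc1 E(3)]) (use L in auto)
  hence E2: "TF1 c h k1 k2 k3 l1 l2 l3 0 = 0" "TS1 h k1 k2 k3 l1 l2 l3 0 = 0" by auto
  define S1 where "S1 = k1*l1 + k2*l2 + k3*l3"
  define S2 where "S2 = k1*(l1*l1) + k2*(l2*l2) + k3*(l3*l3)"
  define S3 where "S3 = k1*(l1*l1*l1) + k2*(l2*l2*l2) + k3*(l3*l3*l3)"
  have "h * S1 = 0" using E2(2) unfolding TS1_def S1_def by (simp add: algebra_simps)
  hence s1: "S1 = 0" using h by simp
  have "c * S2 = TS h k0 k1 k2 k3 l1 l2 l3 0 - TF c h k0 k1 k2 k3 l1 l2 l3 0"
    unfolding TS_def TF_def S2_def by (simp add: algebra_simps)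
  hence "c * S2 = 0" using E by simp
  hence s2: "S2 = 0" using c by simp
  have "h * S1 - c * S3 = TF1 c h k1 k2 k3 l1 l2 l3 0"
    unfolding TF1_def S1_def S3_def by (simp add: algebra_simps)
  hence "c * S3 = 0" using E2 s1 by simp
  hence s3: "S3 = 0" using c by simp
  have l0: "l1 \<noteq> 0" "l2 \<noteq> 0" "l3 \<noteq> 0" "l1 \<noteq> l2" "l1 \<noteq> l3" "l2 \<noteq> l3" using ll a b
    by (auto simp: divide_pos_pos)
  have "k1 * l1 * (l1 - l2) * (l1 - l3) = S3 - (l2 + l3) * S2 + l2 * l3 * S1"
    unfolding S1_def S2_def S3_def by (simp add: algebra_simps)
  hence K1: "k1 = 0" using s1 s2 s3 l0 by simp
  have "k2 * l2 * (l2 - l1) * (l2 - l3) = S3 - (l1 + l3) * S2 + l1 * l3 * S1"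
    unfolding S1_def S2_def S3_def by (simp add: algebra_simps)
  hence K2: "k2 = 0" using s1 s2 s3 l0 by simp
  have "k3 * l3 * (l3 - l1) * (l3 - l2) = S3 - (l1 + l2) * S2 + l1 * l2 * S1"
    unfolding S1_def S2_def S3_def by (simp add: algebra_simps)
  hence K3: "k3 = 0" using s1 s2 s3 l0 by simp
  have "k0 = 0" using E(2) K1 K2 K3 unfolding TS_def by simp
  thus ?thesis using K1 K2 K3 by simp
qed

lemma Mmap_surj: "surj (Mmap b c h L l1 l2 l3)"
proof (rule linear_inj_imp_surj[OF Mmap_linear])
  show "inj (Mmap b c h L l1 l2 l3)"
    unfolding linear_injective_0[OF Mmap_linear]
  proof (intro allI impI)
    fix k :: "real \<times> real \<times> real \<times> real"
    assume k: "Mmap b c h L l1 l2 l3 k = 0"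
    obtain k0 k1 k2 k3 where kk: "k = (k0, k1, k2, k3)" by (metis prod.exhaust)
    show "k = 0" using Mmap_kernel[of k0 k1 k2 k3] k kk by (simp add: zero_prod_def)
  qed
qed

end


lemma bvp_exists:
  fixes L \<phi> \<kappa>f \<kappa>s hv cpf mc Ac Tb qHG :: real
  assumes pos: "0 < L" "0 < \<phi>" "\<phi> < 1" "0 < \<kappa>f" "0 < \<kappa>s" "0 < hv" "0 < cpf" "0 < mc" "0 < Ac"
  shows "\<exists>Tf Ts. bvp_solution L \<phi> \<kappa>f \<kappa>s hv cpf mc Ac Tb qHG Tf Ts"
proof -
  define a where "a = \<phi>*\<kappa>f"
  define b where "b = cpf*(mc/Ac)"
  define c where "c = (1-\<phi>)*\<kappa>s"
  define h where "h = hv"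
  have a: "0 < a" and b: "0 < b" and c: "0 < c" and h: "0 < h" and L: "0 < L"
    using pos unfolding a_def b_def c_def h_def by auto
  obtain l1 l2 l3 where r1: "a*c*l1^3 - b*c*l1^2 - h*(a+c)*l1 + b*h = 0"
    and r2: "a*c*l2^3 - b*c*l2^2 - h*(a+c)*l2 + b*h = 0"
    and r3: "a*c*l3^3 - b*c*l3^2 - h*(a+c)*l3 + b*h = 0"
    and ll: "l1 < 0" "0 < l2" "l2 < b/a" "b/a < l3"
    using cubic_roots[OF a b c h] by blast
  obtain k where k: "Mmap b c h L l1 l2 l3 k = (Tb, Tb, qHG, 0)"
    using Mmap_surj[OF a b c h L r1 r2 r3 ll] by (metis surjD)
  obtain k0 k1 k2 k3 where kk: "k = (k0, k1, k2, k3)" by (metis prod.exhaust)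
  define Tf where "Tf = TF c h k0 k1 k2 k3 l1 l2 l3"
  define Ts where "Ts = TS h k0 k1 k2 k3 l1 l2 l3"
  define Tf' where "Tf' = TF1 c h k1 k2 k3 l1 l2 l3"
  define Ts' where "Ts' = TS1 h k1 k2 k3 l1 l2 l3"
  define Tf'' where "Tf'' = TF2 c h k1 k2 k3 l1 l2 l3"
  define Ts'' where "Ts'' = TS2 h k1 k2 k3 l1 l2 l3"
  have E: "Tf 0 = Tb" "Ts 0 = Tb" "c * Ts' L + b * (Ts L - Tf L) = qHG"
    "Tf' L - (h/b) * (Ts L - Tf L) = 0"
    using k unfolding kk Mmap_def Let_def Tf_def Ts_def Tf'_def Ts'_def by simp_all
  have "bvp_solution L \<phi> \<kappa>f \<kappa>s hv cpf mc Ac Tb qHG Tf Ts"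
    unfolding bvp_solution_def
  proof (rule exI[of _ Tf'], rule exI[of _ Ts'], rule exI[of _ Tf''], rule exI[of _ Ts''], intro conjI ballI)
    fix y :: real
    show "(Tf has_real_derivative Tf' y) (at y within {0..L})"
      unfolding Tf_def Tf'_def by (rule has_field_derivative_at_within[OF TF_der])
    show "(Ts has_real_derivative Ts' y) (at y within {0..L})"
      unfolding Ts_def Ts'_def by (rule has_field_derivative_at_within[OF TS_der])
    show "(Tf' has_real_derivative Tf'' y) (at y)"
      unfolding Tf''_def Tf'_def by (rule TF1_der)
    show "(Ts' has_real_derivative Ts'' y) (at y)"
      unfolding Ts''_def Ts'_def by (rule TS1_der)
    have "- a * Tf'' y + b * Tf' y = h * (Ts y - Tf y)"
      unfolding Tf_def Ts_def Tf'_def Tf''_def by (rule TF_ode[OF r1 r2 r3])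
    thus "- \<phi> * \<kappa>f * Tf'' y + cpf * (mc / Ac) * Tf' y = hv * (Ts y - Tf y)"
      unfolding a_def b_def h_def by simp
    have "c * Ts'' y = h * (Ts y - Tf y)"
      unfolding Tf_def Ts_def Ts''_def by (rule TS_ode)
    thus "(1 - \<phi>) * \<kappa>s * Ts'' y = hv * (Ts y - Tf y)"
      unfolding c_def h_def by simp
  next
    show "continuous_on {0..L} Tf'" unfolding Tf'_def by (rule TF1_cont)
    show "continuous_on {0..L} Ts'" unfolding Ts'_def by (rule TS1_cont)
    show "Tf 0 = Tb" "Ts 0 = Tb" using E by auto
    show "(1 - \<phi>) * \<kappa>s * Ts' L = qHG - cpf * (mc / Ac) * (Ts L - Tf L)"
      using E(3) unfolding c_def b_def by simp
    have "Tf' L = (h/b) * (Ts L - Tf L)" using E(4) by simp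
    moreover have "h/b = (hv * Ac) / (cpf * mc)" unfolding h_def b_def using pos by (simp add: field_simps)
    ultimately show "Tf' L = (hv * Ac) / (cpf * mc) * (Ts L - Tf L)" by simp
  qed
  thus ?thesis by blast
qed

theorem proposition2:
  fixes L \<phi> \<kappa>f \<kappa>s hv cpf mc Ac Tb qHG :: real
  assumes "0 < L" and "0 < \<phi>" and "\<phi> < 1"
    and "0 < \<kappa>f" and "0 < \<kappa>s" and "0 < hv" and "0 < cpf" and "0 < mc" and "0 < Ac"
  shows "(\<exists>Tf Ts. bvp_solution L \<phi> \<kappa>f \<kappa>s hv cpf mc Ac Tb qHG Tf Ts) \<and>
         (\<forall>Tf Ts Tf2 Ts2. bvp_solution L \<phi> \<kappa>f \<kappa>s hv cpf mc Ac Tb qHG Tf Ts \<and>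
              bvp_solution L \<phi> \<kappa>f \<kappa>s hv cpf mc Ac Tb qHG Tf2 Ts2 \<longrightarrow>
              (\<forall>y\<in>{0..L}. Tf y = Tf2 y \<and> Ts y = Ts2 y)) \<and>
         (0 < qHG \<longrightarrow> (\<forall>Tf Ts. bvp_solution L \<phi> \<kappa>f \<kappa>s hv cpf mc Ac Tb qHG Tf Ts \<longrightarrow>
              (\<forall>y\<in>{0<..L}. Ts y - Tf y > 0) \<and>
              mono_on {0..L} Tf \<and> (\<forall>y\<in>{0..L}. Tf y \<ge> Tb) \<and>
              mono_on {0..L} Ts \<and> (\<forall>y\<in>{0..L}. Ts y \<ge> Tb))) \<and>
         (qHG = 0 \<longrightarrow> (\<forall>Tf Ts. bvp_solution L \<phi> \<kappa>f \<kappa>s hv cpf mc Ac Tb qHG Tf Ts \<longrightarrow>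
              (\<forall>y\<in>{0..L}. Tf y = Tb \<and> Ts y = Tb)))"
proof -
  note pos = assms
  define a where "a = \<phi>*\<kappa>f"
  define b where "b = cpf*(mc/Ac)"
  define c where "c = (1-\<phi>)*\<kappa>s"
  have a: "0 < a" and b: "0 < b" and c: "0 < c" and h: "0 < hv" and L: "0 < L"
    using pos unfolding a_def b_def c_def by auto
  have P1: "\<exists>Tf Ts. bvp_solution L \<phi> \<kappa>f \<kappa>s hv cpf mc Ac Tb qHG Tf Ts" by (rule bvp_exists[OF pos])
  have P2: "\<forall>y\<in>{0..L}. Tf y = Tf2 y \<and> Ts y = Ts2 y"
    if B1: "bvp_solution L \<phi> \<kappa>f \<kappa>s hv cpf mc Ac Tb qHG Tf Ts"
      and B2: "bvp_solution L \<phi> \<kappa>f \<kappa>s hv cpf mc Ac Tb qHG Tf2 Ts2" for Tf Ts Tf2 Ts2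
  proof -
    obtain Tf' Ts' where S1: "sys a b c hv L (\<lambda>y. Ts y - Tf y) Tf' Ts'"
      and f1: "\<forall>y\<in>{0<..<L}. (Tf has_real_derivative Tf' y) (at y)" "continuous_on {0..L} Tf"
      and i1: "Tf 0 = Tb" "Ts 0 = Tb"
      and bc1: "b * Tf' L = hv * (Ts L - Tf L)" "c * Ts' L + b * (Ts L - Tf L) = qHG"
      using bvp_sys[OF pos B1] unfolding a_def b_def c_def by blast
    obtain Tf2' Ts2' where S2: "sys a b c hv L (\<lambda>y. Ts2 y - Tf2 y) Tf2' Ts2'"
      and f2: "\<forall>y\<in>{0<..<L}. (Tf2 has_real_derivative Tf2' y) (at y)" "continuous_on {0..L} Tf2"
      and i2: "Tf2 0 = Tb" "Ts2 0 = Tb"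
      and bc2: "b * Tf2' L = hv * (Ts2 L - Tf2 L)" "c * Ts2' L + b * (Ts2 L - Tf2 L) = qHG"
      using bvp_sys[OF pos B2] unfolding a_def b_def c_def by blast
    have S: "sys a b c hv L (\<lambda>y. (Ts y - Tf y) - (Ts2 y - Tf2 y)) (\<lambda>y. Tf' y - Tf2' y) (\<lambda>y. Ts' y - Ts2' y)"
      by (rule sys_diff[OF S1 S2])
    have Z: "(Ts y - Tf y) - (Ts2 y - Tf2 y) = 0 \<and> Tf' y - Tf2' y = 0 \<and> Ts' y - Ts2' y = 0"
      if "0 \<le> y" "y \<le> L" for y
    proof (rule sys_q0[OF a b c h L S _ _ _ that])
      show "Ts 0 - Tf 0 - (Ts2 0 - Tf2 0) = 0" using i1 i2 by simp
      show "b * (Tf' L - Tf2' L) = hv * (Ts L - Tf L - (Ts2 L - Tf2 L))" using bc1 bc2 by (simp add: algebra_simps)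
      show "c * (Ts' L - Ts2' L) + b * (Ts L - Tf L - (Ts2 L - Tf2 L)) = 0" using bc1 bc2 by (simp add: algebra_simps)
    qed
    have fd: "(\<lambda>y. Tf y - Tf2 y) y = (\<lambda>y. Tf y - Tf2 y) 0" if "0 \<le> y" "y \<le> L" for y
    proof (rule const_from_deriv[of L _ "\<lambda>y. Tf' y - Tf2' y"])
      show "continuous_on {0..L} (\<lambda>y. Tf y - Tf2 y)" using f1 f2 by (intro continuous_on_diff) auto
      show "\<forall>y\<in>{0<..<L}. ((\<lambda>y. Tf y - Tf2 y) has_real_derivative Tf' y - Tf2' y) (at y)"
        using f1 f2 by (auto intro: DERIV_diff)
      show "\<forall>y\<in>{0..L}. Tf' y - Tf2' y = 0" using Z by auto
    qed (use that in auto)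
    show ?thesis
    proof
      fix y assume y: "y \<in> {0..L}"
      have "Tf y = Tf2 y" using fd[of y] y i1 i2 by simp
      moreover have "(Ts y - Tf y) - (Ts2 y - Tf2 y) = 0" using Z[of y] y by simp
      ultimately show "Tf y = Tf2 y \<and> Ts y = Ts2 y" by simp
    qed
  qed
  have P3: "(\<forall>y\<in>{0<..L}. Ts y - Tf y > 0) \<and>
              mono_on {0..L} Tf \<and> (\<forall>y\<in>{0..L}. Tf y \<ge> Tb) \<and>
              mono_on {0..L} Ts \<and> (\<forall>y\<in>{0..L}. Ts y \<ge> Tb)"
    if q: "0 < qHG" and B: "bvp_solution L \<phi> \<kappa>f \<kappa>s hv cpf mc Ac Tb qHG Tf Ts" for Tf Ts
  proof -
    obtain Tf' Ts' where S: "sys a b c hv L (\<lambda>y. Ts y - Tf y) Tf' Ts'"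
      and f: "\<forall>y\<in>{0<..<L}. (Tf has_real_derivative Tf' y) (at y)" "continuous_on {0..L} Tf"
      and s: "\<forall>y\<in>{0<..<L}. (Ts has_real_derivative Ts' y) (at y)" "continuous_on {0..L} Ts"
      and i: "Tf 0 = Tb" "Ts 0 = Tb"
      and bc: "b * Tf' L = hv * (Ts L - Tf L)" "c * Ts' L + b * (Ts L - Tf L) = qHG"
      using bvp_sys[OF pos B] unfolding a_def b_def c_def by blast
    have D0: "Ts 0 - Tf 0 = 0" using i by simp
    note R = sys_qpos[OF a b c h L S D0 bc q]
    have mf: "mono_on {0..L} Tf"
    proof (rule mono_onI)
      fix r t assume rt: "r \<in> {0..L}" "t \<in> {0..L}" "r \<le> t"
      show "Tf r \<le> Tf t"
      proof (rule incr_sub[OF f(2), of r t Tf'])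
        fix z assume z: "r < z" "z < t"
        show "(Tf has_real_derivative Tf' z) (at z) \<and> 0 \<le> Tf' z"
          using f(1) R(1) z rt by (auto intro: less_imp_le)
      qed (use rt in auto)
    qed
    have ms: "mono_on {0..L} Ts"
    proof (rule mono_onI)
      fix r t assume rt: "r \<in> {0..L}" "t \<in> {0..L}" "r \<le> t"
      show "Ts r \<le> Ts t"
      proof (rule incr_sub[OF s(2), of r t Ts'])
        fix z assume z: "r < z" "z < t"
        show "(Ts has_real_derivative Ts' z) (at z) \<and> 0 \<le> Ts' z"
          using s(1) R(1) z rt by (auto intro: less_imp_le)
      qed (use rt in auto)
    qed
    have "Tf y \<ge> Tb" if "y \<in> {0..L}" for y using mf that i L unfolding mono_on_def by auto
    moreover have "Ts y \<ge> Tb" if "y \<in> {0..L}" for y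
    proof -
      have "Ts 0 \<le> Ts y" by (rule mono_onD[OF ms]) (use that L in auto)
      thus ?thesis using i by simp
    qed
    ultimately show ?thesis using R(2) mf ms by auto
  qed
  have P4: "\<forall>y\<in>{0..L}. Tf y = Tb \<and> Ts y = Tb"
    if q: "qHG = 0" and B: "bvp_solution L \<phi> \<kappa>f \<kappa>s hv cpf mc Ac Tb qHG Tf Ts" for Tf Ts
  proof -
    obtain Tf' Ts' where S: "sys a b c hv L (\<lambda>y. Ts y - Tf y) Tf' Ts'"
      and f: "\<forall>y\<in>{0<..<L}. (Tf has_real_derivative Tf' y) (at y)" "continuous_on {0..L} Tf"
      and i: "Tf 0 = Tb" "Ts 0 = Tb"
      and bc: "b * Tf' L = hv * (Ts L - Tf L)" "c * Ts' L + b * (Ts L - Tf L) = qHG"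
      using bvp_sys[OF pos B] unfolding a_def b_def c_def by blast
    have D0: "Ts 0 - Tf 0 = 0" using i by simp
    have Z: "Ts y - Tf y = 0 \<and> Tf' y = 0 \<and> Ts' y = 0" if "0 \<le> y" "y \<le> L" for y
      using sys_q0[OF a b c h L S D0 bc(1) _ that] bc(2) q by simp
    show ?thesis
    proof
      fix y assume y: "y \<in> {0..L}"
      have "Tf y = Tf 0" by (rule const_from_deriv[OF f(2) f(1)]) (use Z y in auto)
      thus "Tf y = Tb \<and> Ts y = Tb" using Z[of y] y i by simp
    qed
  qed
  show ?thesis using P1 P2 P3 P4 by blast
qed


end
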